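(* Let $a>0$, $\alpha\in[0,1)$ and $f\in\mathcal C_a$. The function $\mathrm{Sh}_\alpha(f)$ is differentiable on $(-\infty,s_\alpha)$ and $\mathrm{Sh}_\alpha(f)'(x)<\alpha$ for every $x\in(-\infty,s_\alpha)$.
   Context: $\mathcal C_a$ is the set of $C^1$ functions $f:\mathbb R\to\mathbb R$ that are even, satisfy $f(s)=|s|$ for $|s|\ge a$ and are strictly convex on $[-a,a]$. For $f\in\mathcal C_a$: $F_\alpha(s)=f(s)-\alpha s$, $x_\alpha^+=(f')^{-1}(\alpha)\in[0,a)$ (inverse of $f':[-a,a]\to[-1,1]$); $F_\alpha$ decreases on $(-\infty,x_\alpha^+]$ and increases on $[x_\alpha^+,\infty)$. Let $F_\alpha^{-1}$ be the inverse of $F_\alpha|_{[x_\alpha^+,\infty)}$, $\phi=F_\alpha^{-1}\circ F_\alpha$, $\delta_x=(1-\alpha)^{-1}F_\alpha(x)-\phi(x)$, $s_\alpha=x_\alpha^++\delta_{x_\alpha^+}$; $x\mapsto x+\delta_x$ is an increasing bijection $(-\infty,x_\alpha^+]\to(-\infty,s_\alpha]$ with inverse $\tau$. Define $\mathrm{Sh}_\alpha(f)(x)=\alpha x+F_\alpha(\tau(x))$ for $x\le s_\alpha$ and $=x$ for $x>s_\alpha$. *)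

theory Defs
  imports "HOL-Analysis.Analysis"
begin

definition strictly_convex_on :: "real set \<Rightarrow> (real \<Rightarrow> real) \<Rightarrow> bool" where
  "strictly_convex_on S f \<longleftrightarrow> convex S \<and>
    (\<forall>x\<in>S. \<forall>y\<in>S. \<forall>t. x \<noteq> y \<longrightarrow> 0 < t \<longrightarrow> t < 1 \<longrightarrow>
       f ((1 - t) * x + t * y) < (1 - t) * f x + t * f y)"

definition Ca :: "real \<Rightarrow> (real \<Rightarrow> real) set" where
  "Ca a = {f. (\<forall>x. f differentiable (at x)) \<and> continuous_on UNIV (deriv f)
              \<and> (\<forall>s. f (- s) = f s)
              \<and> (\<forall>s. \<bar>s\<bar> \<ge> a \<longrightarrow> f s = \<bar>s\<bar>)
              \<and> strictly_convex_on {-a..a} f}"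

definition Falpha :: "(real \<Rightarrow> real) \<Rightarrow> real \<Rightarrow> real \<Rightarrow> real" where
  "Falpha f \<alpha> s = f s - \<alpha> * s"

definition xplus :: "real \<Rightarrow> (real \<Rightarrow> real) \<Rightarrow> real \<Rightarrow> real" where
  "xplus a f \<alpha> = (THE x. x \<in> {-a..a} \<and> deriv f x = \<alpha>)"

definition Finv :: "real \<Rightarrow> (real \<Rightarrow> real) \<Rightarrow> real \<Rightarrow> real \<Rightarrow> real" where
  "Finv a f \<alpha> y = (THE z. z \<ge> xplus a f \<alpha> \<and> Falpha f \<alpha> z = y)"

definition phi :: "real \<Rightarrow> (real \<Rightarrow> real) \<Rightarrow> real \<Rightarrow> real \<Rightarrow> real" where
  "phi a f \<alpha> x = Finv a f \<alpha> (Falpha f \<alpha> x)"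

definition delta :: "real \<Rightarrow> (real \<Rightarrow> real) \<Rightarrow> real \<Rightarrow> real \<Rightarrow> real" where
  "delta a f \<alpha> x = Falpha f \<alpha> x / (1 - \<alpha>) - phi a f \<alpha> x"

definition salpha :: "real \<Rightarrow> (real \<Rightarrow> real) \<Rightarrow> real \<Rightarrow> real" where
  "salpha a f \<alpha> = xplus a f \<alpha> + delta a f \<alpha> (xplus a f \<alpha>)"

definition tau :: "real \<Rightarrow> (real \<Rightarrow> real) \<Rightarrow> real \<Rightarrow> real \<Rightarrow> real" where
  "tau a f \<alpha> y = (THE x. x \<le> xplus a f \<alpha> \<and> x + delta a f \<alpha> x = y)"

definition Sh :: "real \<Rightarrow> real \<Rightarrow> (real \<Rightarrow> real) \<Rightarrow> real \<Rightarrow> real" where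
  "Sh a \<alpha> f x = (if x \<le> salpha a f \<alpha> then \<alpha> * x + Falpha f \<alpha> (tau a f \<alpha> x) else x)"

end

theory Submission
  imports Defs
begin

lemma tangent_right:
  fixes f :: "real \<Rightarrow> real"
  assumes cv: "convex_on {l..u} f" and "l \<le> c" "c < x" "x \<le> u"
    and der: "(f has_real_derivative D) (at c)"
  shows "D * (x - c) \<le> f x - f c"
proof -
  have lim: "((\<lambda>y. (f y - f c) / (y - c)) \<longlongrightarrow> D) (at_right c)"
    using der unfolding has_field_derivative_iff by (blast intro: tendsto_mono at_le)
  have "eventually (\<lambda>y. (f y - f c) / (y - c) \<le> (f x - f c) / (x - c)) (at_right c)"
    using eventually_at_right_real[OF \<open>c < x\<close>]
  proof eventually_elim
    fix y assume y: "y \<in> {c<..<x}"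
    have "f y \<le> (f x - f c) / (x - c) * (y - c) + f c"
      using assms y
      by (intro convex_onD_Icc'[of c x f y] convex_on_subset[OF cv]) auto
    thus "(f y - f c) / (y - c) \<le> (f x - f c) / (x - c)" using y by (simp add: field_split_simps)
  qed
  hence "D \<le> (f x - f c) / (x - c)"
    using lim by (simp add: tendsto_upperbound)
  thus ?thesis using assms by (simp add: field_simps)
qed

lemma tangent_left:
  fixes f :: "real \<Rightarrow> real"
  assumes cv: "convex_on {l..u} f" and "l \<le> x" "x < c" "c \<le> u"
    and der: "(f has_real_derivative D) (at c)"
  shows "D * (x - c) \<le> f x - f c"
proof -
  have lim: "((\<lambda>y. (f y - f c) / (y - c)) \<longlongrightarrow> D) (at_left c)"
    using der unfolding has_field_derivative_iff by (blast intro: tendsto_mono at_le)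
  have "eventually (\<lambda>y. (f y - f c) / (y - c) \<ge> (f x - f c) / (x - c)) (at_left c)"
    using eventually_at_left_real[OF \<open>x < c\<close>]
  proof eventually_elim
    fix y assume y: "y \<in> {x<..<c}"
    have "f y \<le> (f x - f c) / (c - x) * (c - y) + f c"
      using assms y
      by (intro convex_onD_Icc''[of x c f y] convex_on_subset[OF cv]) auto
    hence "f y - f c \<le> (f x - f c) * ((c - y) / (c - x))" by simp
    also have "(c - y) / (c - x) = (y - c) / (x - c)" using y by (simp add: field_simps)
    finally show "(f y - f c) / (y - c) \<ge> (f x - f c) / (x - c)" using y
      by (simp add: field_split_simps)
  qed
  hence "D \<ge> (f x - f c) / (x - c)"
    using lim by (simp add: tendsto_lowerbound)
  thus ?thesis using assms by (simp add: field_simps)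
qed

locale shctx =
  fixes a \<alpha> :: real and f :: "real \<Rightarrow> real"
  assumes apos: "a > 0" and al0: "0 \<le> \<alpha>" and al1: "\<alpha> < 1" and fC: "f \<in> Ca a"
begin

abbreviation "f' \<equiv> deriv f"

lemma fder: "(f has_real_derivative f' x) (at x)"
  using fC unfolding Ca_def by (simp add: DERIV_deriv_iff_real_differentiable)

lemma fdcont: "isCont f' x"
  using fC unfolding Ca_def by (simp add: continuous_on_eq_continuous_at)

lemma fabs: "\<bar>s\<bar> \<ge> a \<Longrightarrow> f s = \<bar>s\<bar>"
  using fC unfolding Ca_def by auto

lemma fsc: "strictly_convex_on {-a..a} f"
  using fC unfolding Ca_def by auto

lemma fcvx: "convex_on {-a..a} f"
proof -
  have "f (u *\<^sub>R x + v *\<^sub>R y) \<le> u * f x + v * f y"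
    if "x \<in> {-a..a}" "y \<in> {-a..a}" "u \<ge> 0" "v \<ge> 0" "u + v = 1" for x y u v
  proof (cases "x = y \<or> u = 0 \<or> v = 0")
    case True
    then show ?thesis using that
    proof (elim disjE)
      assume "x = y" then show ?thesis using that by (simp flip: distrib_right)
    qed (use that in auto)
  next
    case False
    then have "f ((1 - v) * x + v * y) < (1 - v) * f x + v * f y"
      using fsc that unfolding strictly_convex_on_def by auto
    moreover have "u = 1 - v" using that by simp
    ultimately show ?thesis by simp
  qed
  then show ?thesis unfolding convex_on_def by auto
qed

lemma fd_gt: "s > a \<Longrightarrow> f' s = 1"
proof -
  assume s: "s > a"
  have "((\<lambda>x. x) has_real_derivative 1) (at s)" by (rule DERIV_ident)
  then have "(f has_real_derivative 1) (at s)"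
    by (rule has_field_derivative_transform_within_open[of _ _ _ "{a<..}"])
       (use s apos fabs in auto)
  then show ?thesis using fder DERIV_unique by blast
qed

lemma fd_lt: "s < -a \<Longrightarrow> f' s = -1"
proof -
  assume s: "s < -a"
  have "((\<lambda>x. - x) has_real_derivative -1) (at s)" by (rule derivative_eq_intros refl)+
  then have "(f has_real_derivative -1) (at s)"
    by (rule has_field_derivative_transform_within_open[of _ _ _ "{..< -a}"])
       (use s apos fabs in auto)
  then show ?thesis using fder DERIV_unique by blast
qed

lemma fd_a: "f' a = 1"
proof -
  have l1: "(f' \<longlongrightarrow> f' a) (at_right a)"
    using fdcont[of a] unfolding isCont_def by (blast intro: tendsto_mono at_le)
  have "eventually (\<lambda>s. 1 = f' s) (at_right a)"
    using eventually_at_right_real[of a "a+1"] by (auto elim!: eventually_mono simp: fd_gt)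
  then have l2: "(f' \<longlongrightarrow> 1) (at_right a)"
    by (rule Lim_transform_eventually[OF tendsto_const])
  show ?thesis using tendsto_unique[OF _ l1 l2] by simp
qed

lemma fd_ma: "f' (-a) = -1"
proof -
  have l1: "(f' \<longlongrightarrow> f' (-a)) (at_left (-a))"
    using fdcont[of "-a"] unfolding isCont_def by (blast intro: tendsto_mono at_le)
  have "eventually (\<lambda>s. -1 = f' s) (at_left (-a))"
    using eventually_at_left_real[of "-a-1" "-a"] by (auto elim!: eventually_mono simp: fd_lt)
  then have l2: "(f' \<longlongrightarrow> -1) (at_left (-a))"
    by (rule Lim_transform_eventually[OF tendsto_const])
  show ?thesis using tendsto_unique[OF _ l1 l2] by simp
qed

lemma fd_mono: assumes "-a \<le> x" "x < y" "y \<le> a" shows "f' x < f' y"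
proof -
  define m where "m = (x + y) / 2"
  have m: "x < m" "m < y" using assms by (auto simp: m_def)
  have t1: "f' x * (m - x) \<le> f m - f x"
    using tangent_right[OF fcvx _ m(1) _ fder] assms m by auto
  have t2: "f' y * (m - y) \<le> f m - f y"
    using tangent_left[OF fcvx _ m(2) _ fder] assms m by auto
  have "f ((1 - 1/2) * x + (1/2) * y) < (1 - 1/2) * f x + (1/2) * f y"
  proof -
    have "\<forall>t. 0 < t \<longrightarrow> t < 1 \<longrightarrow> f ((1 - t) * x + t * y) < (1 - t) * f x + t * f y"
      using fsc assms unfolding strictly_convex_on_def by auto
    moreover have "(0::real) < 1/2" "(1::real)/2 < 1" by auto
    ultimately show ?thesis by blast
  qed
  then have sc: "2 * f m < f x + f y" by (simp add: m_def field_simps)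
  have e: "y - m = m - x" by (simp add: m_def field_simps)
  have "m - x > 0" using m by simp
  have t2': "f y - f m \<le> f' y * (y - m)" using t2 by (simp add: algebra_simps)
  have "f' x * (m - x) < f' y * (m - x)" using t1 t2' sc unfolding e by linarith
  then show ?thesis using \<open>m - x > 0\<close> by simp
qed


abbreviation "x0 \<equiv> xplus a f \<alpha>"
abbreviation "FF \<equiv> Falpha f \<alpha>"

lemma x0_ex1: "\<exists>!x. x \<in> {-a..a} \<and> f' x = \<alpha>"
proof -
  have "\<exists>x. -a \<le> x \<and> x \<le> a \<and> f' x = \<alpha>"
    by (rule IVT) (use fd_a fd_ma al0 al1 apos fdcont in auto)
  moreover have "x = y" if "x \<in> {-a..a}" "y \<in> {-a..a}" "f' x = \<alpha>" "f' y = \<alpha>" for x y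
    using fd_mono[of x y] fd_mono[of y x] that by (cases x y rule: linorder_cases) auto
  ultimately show ?thesis by (metis atLeastAtMost_iff)
qed

lemma x0: "x0 \<in> {-a..a}" "f' x0 = \<alpha>"
  using theI'[OF x0_ex1] unfolding xplus_def by auto

lemma fd_below: "t < x0 \<Longrightarrow> f' t < \<alpha>"
  using fd_mono[of t x0] x0 fd_lt[of t] al0 by (cases "t < -a") auto

lemma fd_above: "t > x0 \<Longrightarrow> f' t > \<alpha>"
  using fd_mono[of x0 t] x0 fd_gt[of t] al1 by (cases "t > a") auto

lemma fd_le1: "f' t \<le> 1"
proof -
  consider "t < -a" | "-a \<le> t" "t < a" | "t = a" | "t > a" by linarith
  then show ?thesis
    using fd_lt fd_gt fd_a fd_mono[of t a] by cases auto
qed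

lemma x0_lt_a: "x0 < a"
  using x0 fd_a al1 by (metis atLeastAtMost_iff less_eq_real_def less_irrefl)

lemma Fder: "(FF has_real_derivative (f' s - \<alpha>)) (at s)"
  unfolding Falpha_def[abs_def] by (rule derivative_eq_intros fder refl)+ simp

lemma Fcont: "isCont FF s"
  using Fder DERIV_isCont by blast

lemma Fcont_on: "continuous_on S FF"
  using Fcont by (simp add: continuous_at_imp_continuous_on)

lemma F_inc: assumes "x0 \<le> u" "u < v" shows "FF u < FF v"
  by (rule DERIV_pos_imp_increasing_open[OF assms(2)])
     (use assms Fder fd_above Fcont_on in \<open>force+\<close>)

lemma F_dec: assumes "u < v" "v \<le> x0" shows "FF u > FF v"
  by (rule DERIV_neg_imp_decreasing_open[OF assms(1)])
     (use assms Fder fd_below Fcont_on in \<open>force+\<close>)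

lemma F_big: "s \<ge> a \<Longrightarrow> FF s = (1 - \<alpha>) * s"
  using fabs[of s] apos by (simp add: Falpha_def algebra_simps)

lemma F_small: "s \<le> -a \<Longrightarrow> FF s = - (1 + \<alpha>) * s"
  using fabs[of s] apos by (simp add: Falpha_def algebra_simps)


abbreviation "Fi \<equiv> Finv a f \<alpha>"
abbreviation "ph \<equiv> phi a f \<alpha>"

lemma F_surj: assumes "y \<ge> FF x0" shows "\<exists>z\<ge>x0. FF z = y"
proof -
  define b where "b = max a (y / (1 - \<alpha>))"
  have b: "b \<ge> a" "b \<ge> y / (1 - \<alpha>)" by (auto simp: b_def)
  have "FF b = (1 - \<alpha>) * b" using F_big b by simp
  also have "\<dots> \<ge> y" using b(2) al1 by (simp add: field_simps)
  finally have "\<exists>z. x0 \<le> z \<and> z \<le> b \<and> FF z = y"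
    by (intro IVT) (use assms b x0_lt_a Fcont in auto)
  then show ?thesis by blast
qed

lemma F_inj: "x0 \<le> u \<Longrightarrow> x0 \<le> v \<Longrightarrow> FF u = FF v \<Longrightarrow> u = v"
  using F_inc[of u v] F_inc[of v u] by (cases u v rule: linorder_cases) auto

lemma Fi: assumes "y \<ge> FF x0" shows "Fi y \<ge> x0" "FF (Fi y) = y"
proof -
  have "\<exists>!z. z \<ge> x0 \<and> FF z = y" using F_surj[OF assms] F_inj by blast
  from theI'[OF this] show "Fi y \<ge> x0" "FF (Fi y) = y" unfolding Finv_def by auto
qed

lemma Fi_F: "z \<ge> x0 \<Longrightarrow> Fi (FF z) = z"
  using Fi[of "FF z"] F_inj F_inc[of x0 z] by (metis order.strict_iff_order order_refl)

lemma F_ge: "FF x0 \<le> FF t"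
  using F_inc[of x0 t] F_dec[of t x0] by (cases t x0 rule: linorder_cases) auto

lemma ph: "ph t \<ge> x0" "FF (ph t) = FF t"
  using Fi[OF F_ge] unfolding phi_def by auto

lemma ph_gt: "t < x0 \<Longrightarrow> ph t > x0"
  using ph[of t] F_dec[of t x0] by (metis order.not_eq_order_implies_strict less_irrefl)

lemma ph_small: "t \<le> -a \<Longrightarrow> ph t = FF t / (1 - \<alpha>)"
proof -
  assume t: "t \<le> -a"
  define z where "z = FF t / (1 - \<alpha>)"
  have "FF t = (1 + \<alpha>) * (- t)" using F_small[OF t] by (simp add: algebra_simps)
  also have "\<dots> \<ge> (1 - \<alpha>) * a" using t al0 al1 apos
    by (intro mult_mono) auto
  finally have "z \<ge> a" using al1 by (simp add: z_def field_simps)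
  then have "FF z = FF t" using F_big al1 by (simp add: z_def)
  then have "Fi (FF t) = z" using Fi_F[of z] \<open>z \<ge> a\<close> x0_lt_a by simp
  then show ?thesis by (simp add: phi_def z_def)
qed

lemma Fi_cont_on: assumes "B \<ge> x0" shows "continuous_on (FF ` {x0..B}) Fi"
  by (rule continuous_on_inv) (use Fcont_on Fi_F in auto)

lemma F_img: assumes "B \<ge> x0" shows "{FF x0..FF B} \<subseteq> FF ` {x0..B}"
proof
  fix y assume y: "y \<in> {FF x0..FF B}"
  then obtain z where "x0 \<le> z" "z \<le> B" "FF z = y"
    using IVT[of FF x0 y B] Fcont assms by auto
  then show "y \<in> FF ` {x0..B}" by auto
qed

lemma big_B: "\<exists>B\<ge>x0. FF B > c"
proof -
  define B where "B = max a (c / (1 - \<alpha>)) + 1"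
  have "B \<ge> a" "B > c / (1 - \<alpha>)" by (auto simp: B_def)
  then have "(1 - \<alpha>) * B > c" using al1 by (simp add: field_simps)
  then have "FF B > c" using F_big \<open>B \<ge> a\<close> by simp
  then show ?thesis using \<open>B \<ge> a\<close> x0_lt_a by (intro exI[of _ B]) auto
qed

lemma ph_cont_on: assumes "m \<le> x0" shows "continuous_on {m..x0} ph"
proof -
  obtain B where B: "B \<ge> x0" "FF B > FF m" using big_B by blast
  have sub: "FF ` {m..x0} \<subseteq> FF ` {x0..B}"
  proof
    fix y assume "y \<in> FF ` {m..x0}"
    then obtain t where t: "t \<in> {m..x0}" "y = FF t" by auto
    have "FF t \<le> FF m" using F_dec[of m t] t by (cases "m = t") auto
    then show "y \<in> FF ` {x0..B}" using F_img[OF B(1)] F_ge t B by auto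
  qed
  have "continuous_on {m..x0} (Fi \<circ> FF)"
    by (rule continuous_on_compose[OF Fcont_on continuous_on_subset[OF Fi_cont_on[OF B(1)]]])
       (use sub in auto)
  then show ?thesis by (simp add: phi_def[abs_def] o_def)
qed

lemma ph_der: assumes "t < x0"
  shows "(ph has_real_derivative (f' t - \<alpha>) / (f' (ph t) - \<alpha>)) (at t)"
proof -
  obtain B where B: "B \<ge> x0" "FF B > FF t" using big_B by blast
  have lo: "FF x0 < FF t" using F_dec[OF assms order_refl] .
  have co: "continuous_on {FF x0<..<FF B} Fi"
    using continuous_on_subset[OF Fi_cont_on[OF B(1)]] F_img[OF B(1)] 
    by (meson greaterThanLessThan_subseteq_atLeastAtMost_iff order_refl order_trans)
  have ic: "isCont Fi (FF t)"
    using co lo B(2) by (simp add: continuous_on_eq_continuous_at)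
  have pos: "f' (ph t) - \<alpha> > 0" using fd_above[OF ph_gt[OF assms]] by simp
  have d: "(Fi has_real_derivative inverse (f' (ph t) - \<alpha>)) (at (FF t))"
    by (rule DERIV_inverse_function[where a="FF x0" and b="FF B"])
       (use Fder[of "ph t"] pos lo B(2) Fi ic in \<open>auto simp: phi_def\<close>)
  have "((Fi \<circ> FF) has_real_derivative inverse (f' (ph t) - \<alpha>) * (f' t - \<alpha>)) (at t)"
    by (rule DERIV_chain[OF d Fder])
  then show ?thesis by (simp add: phi_def[abs_def] o_def field_simps)
qed


definition "g t = t + delta a f \<alpha> t"
definition "Dg t = 1 + (f' t - \<alpha>) / (1 - \<alpha>) - (f' t - \<alpha>) / (f' (ph t) - \<alpha>)"
abbreviation "sa \<equiv> salpha a f \<alpha>"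
abbreviation "ta \<equiv> tau a f \<alpha>"

lemma g_alt: "g t = t + FF t / (1 - \<alpha>) - ph t"
  by (simp add: g_def delta_def)

lemma g_der: assumes "t < x0" shows "(g has_real_derivative Dg t) (at t)"
proof -
  have "((\<lambda>t. t + FF t / (1 - \<alpha>) - ph t) has_real_derivative
         1 + (f' t - \<alpha>) / (1 - \<alpha>) - (f' t - \<alpha>) / (f' (ph t) - \<alpha>)) (at t)"
    by (intro DERIV_diff DERIV_add DERIV_ident DERIV_cdivide Fder ph_der[OF assms])
  then show ?thesis by (simp add: g_alt[abs_def] Dg_def)
qed

lemma Dg_ge: assumes "t < x0" shows "Dg t \<ge> 1"
proof -
  define p where "p = f' t - \<alpha>"
  define q where "q = f' (ph t) - \<alpha>"
  have p: "p < 0" using fd_below[OF assms] by (simp add: p_def)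
  have q: "q > 0" "q \<le> 1 - \<alpha>" using fd_above[OF ph_gt[OF assms]] fd_le1[of "ph t"]
    by (auto simp: q_def)
  have "1 / (1 - \<alpha>) \<le> 1 / q" using q by (intro divide_left_mono) auto
  then have "p * (1 / (1 - \<alpha>) - 1 / q) \<ge> 0" using p by (intro mult_nonpos_nonpos) auto
  then show ?thesis unfolding Dg_def p_def[symmetric] q_def[symmetric] by (simp add: algebra_simps)
qed

lemma g_cont_on: assumes "m \<le> x0" shows "continuous_on {m..x0} g"
  unfolding g_alt[abs_def]
  by (intro continuous_intros Fcont_on ph_cont_on[OF assms]) (use al1 in auto)

lemma g_inc: assumes "u < v" "v \<le> x0" shows "g u < g v"
proof (rule DERIV_pos_imp_increasing_open[OF assms(1)])
  fix x assume "u < x" "x < v"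
  then have "x < x0" using assms by simp
  then show "\<exists>y. (g has_real_derivative y) (at x) \<and> y > 0"
    using g_der Dg_ge by (meson less_le_trans zero_less_one)
next
  show "continuous_on {u..v} g"
    using continuous_on_subset[OF g_cont_on[of u]] assms by auto
qed

lemma g_small: "t \<le> -a \<Longrightarrow> g t = t"
  using ph_small by (simp add: g_alt)

lemma sa_eq: "sa = g x0"
  by (simp add: salpha_def g_def)

lemma g_inj: "u \<le> x0 \<Longrightarrow> v \<le> x0 \<Longrightarrow> g u = g v \<Longrightarrow> u = v"
  using g_inc[of u v] g_inc[of v u] by (cases u v rule: linorder_cases) auto

lemma ta: assumes "y < sa" shows "ta y < x0" "g (ta y) = y"
proof -
  define m where "m = min y (-a)"
  have m: "m \<le> x0" using x0 m_def by auto
  have "g m = m" using g_small by (simp add: m_def)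
  then have "\<exists>t. m \<le> t \<and> t \<le> x0 \<and> g t = y"
    by (intro IVT') (use assms sa_eq m m_def g_cont_on[OF m] in auto)
  then have "\<exists>!t. t \<le> x0 \<and> g t = y" using g_inj by blast
  from theI'[OF this] have "ta y \<le> x0" "g (ta y) = y" unfolding tau_def g_def by auto
  then show "ta y < x0" "g (ta y) = y" using assms sa_eq by (auto simp: order.order_iff_strict)
qed

lemma ta_g: "t \<le> x0 \<Longrightarrow> ta (g t) = t"
proof -
  assume t: "t \<le> x0"
  then have "\<exists>!s. s \<le> x0 \<and> g s = g t" using g_inj by blast
  from theI'[OF this] have "ta (g t) \<le> x0" "g (ta (g t)) = g t" unfolding tau_def g_def by auto
  then show ?thesis using g_inj t by blast
qed

lemma main: assumes "y < sa"
  shows "(Sh a \<alpha> f has_real_derivative \<alpha> + (f' (ta y) - \<alpha>) * inverse (Dg (ta y))) (at y)"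
    "\<alpha> + (f' (ta y) - \<alpha>) * inverse (Dg (ta y)) < \<alpha>"
proof -
  define m where "m = min (y - 1) (-a)"
  have m: "m \<le> x0" "m < y" using x0 by (auto simp: m_def)
  have gm: "g m = m" using g_small by (simp add: m_def)
  have co: "continuous_on (g ` {m..x0}) ta"
    by (rule continuous_on_inv) (use g_cont_on[OF m(1)] ta_g in auto)
  have sub: "{m<..<sa} \<subseteq> g ` {m..x0}"
  proof
    fix z assume z: "z \<in> {m<..<sa}"
    have "ta z \<ge> m"
    proof (rule ccontr)
      assume "\<not> ta z \<ge> m"
      then have "g (ta z) < g m" using g_inc m by auto
      then show False using ta[of z] z gm by auto
    qed
    moreover have "ta z \<le> x0" "g (ta z) = z" using ta[of z] z by auto
    ultimately show "z \<in> g ` {m..x0}" by (metis atLeastAtMost_iff image_eqI)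
  qed
  have ic: "isCont ta y"
    using continuous_on_subset[OF co sub] m assms by (simp add: continuous_on_eq_continuous_at)
  have Dpos: "Dg (ta y) > 0" using Dg_ge[OF ta(1)[OF assms]] by simp
  have dta: "(ta has_real_derivative inverse (Dg (ta y))) (at y)"
    by (rule DERIV_inverse_function[where a=m and b=sa])
       (use g_der[OF ta(1)[OF assms]] Dpos m assms ta ic in auto)
  have "((\<lambda>z. \<alpha> * z + FF (ta z)) has_real_derivative \<alpha> * 1 + (f' (ta y) - \<alpha>) * inverse (Dg (ta y))) (at y)"
    by (rule derivative_eq_intros DERIV_chain2[OF Fder dta] refl)+ simp
  then have "((\<lambda>z. \<alpha> * z + FF (ta z)) has_real_derivative \<alpha> + (f' (ta y) - \<alpha>) * inverse (Dg (ta y))) (at y)"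
    by simp
  then show "(Sh a \<alpha> f has_real_derivative \<alpha> + (f' (ta y) - \<alpha>) * inverse (Dg (ta y))) (at y)"
    by (rule has_field_derivative_transform_within_open[of _ _ _ "{..<sa}"])
       (use assms in \<open>auto simp: Sh_def\<close>)
  have "f' (ta y) - \<alpha> < 0" using fd_below[OF ta(1)[OF assms]] by simp
  then show "\<alpha> + (f' (ta y) - \<alpha>) * inverse (Dg (ta y)) < \<alpha>"
    using Dpos by (simp add: mult_neg_pos)
qed

end

theorem lemma3p20:
  fixes a \<alpha> :: real and f :: "real \<Rightarrow> real"
  assumes "a > 0" and "0 \<le> \<alpha>" and "\<alpha> < 1" and "f \<in> Ca a"
  shows "\<forall>x < salpha a f \<alpha>. Sh a \<alpha> f differentiable (at x) \<and> deriv (Sh a \<alpha> f) x < \<alpha>"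
proof (intro allI impI)
  interpret shctx a \<alpha> f using assms by unfold_locales
  fix x assume x: "x < salpha a f \<alpha>"
  show "Sh a \<alpha> f differentiable (at x) \<and> deriv (Sh a \<alpha> f) x < \<alpha>"
    using main[OF x] DERIV_imp_deriv real_differentiable_def by metis
qed

end
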